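(* Let $G$ be a finite connected graph and let $2\le k<|V|$. Then the $k$-node CIS relationship graph $G^{(k)}=(C^{(k)},R^{(k)})$ is connected.
   Context: Let $G=(V,E,L)$ be a finite undirected graph with node set $V$, edge set $E$ (unordered pairs of distinct nodes) and a set $L$ of edge labels $l_{i,j}$ attached to edges $(i,j)\in E$ (labels play no role for connectivity). For $V'\subseteq V$, the induced subgraph on $V'$ has node set $V'$ and edge set $\{(i,j)\in E: i,j\in V'\}$ (with the corresponding labels). A $k$-node CIS (connected induced subgraph) is an induced subgraph on a $k$-element set $V'\subseteq V$ that is connected; $C^{(k)}$ denotes the set of all $k$-node CISes of $G$. The $k$-node CIS relationship graph $G^{(k)}=(C^{(k)},R^{(k)})$ is the simple undirected graph whose nodes are the elements of $C^{(k)}$, where two distinct CISes $s_1,s_2\in C^{(k)}$ are adjacent iff their node sets share exactly $k-1$ nodes. *)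

theory Defs
  imports Main
begin

definition simple_graph :: "'a set \<Rightarrow> 'a set set \<Rightarrow> bool" where
  "simple_graph V E \<longleftrightarrow> (\<forall>e\<in>E. e \<subseteq> V \<and> card e = 2)"

definition connected_rel :: "'b set \<Rightarrow> ('b \<Rightarrow> 'b \<Rightarrow> bool) \<Rightarrow> bool" where
  "connected_rel W adj \<longleftrightarrow> W \<noteq> {} \<and>
     (\<forall>x\<in>W. \<forall>y\<in>W. (x, y) \<in> {(u, v). u \<in> W \<and> v \<in> W \<and> adj u v}\<^sup>*)"

definition induced_edges :: "'a set set \<Rightarrow> 'a set \<Rightarrow> 'a set set" where
  "induced_edges E S = {e \<in> E. e \<subseteq> S}"

definition graph_connected :: "'a set \<Rightarrow> 'a set set \<Rightarrow> bool" where
  "graph_connected V E \<longleftrightarrow> connected_rel V (\<lambda>u v. {u, v} \<in> E)"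

definition is_CIS :: "'a set \<Rightarrow> 'a set set \<Rightarrow> 'a set \<Rightarrow> bool" where
  "is_CIS V E S \<longleftrightarrow> S \<subseteq> V \<and> graph_connected S (induced_edges E S)"

text \<open>C^(k): node sets of all k-node CISes (an induced subgraph is determined by its node set).\<close>
definition CIS_set :: "'a set \<Rightarrow> 'a set set \<Rightarrow> nat \<Rightarrow> 'a set set" where
  "CIS_set V E k = {S. is_CIS V E S \<and> card S = k}"

definition CIS_adj :: "nat \<Rightarrow> 'a set \<Rightarrow> 'a set \<Rightarrow> bool" where
  "CIS_adj k S1 S2 \<longleftrightarrow> S1 \<noteq> S2 \<and> card (S1 \<inter> S2) = k - 1"

end

theory Submission imports Defs begin

definition cr :: "'a set set \<Rightarrow> 'a set \<Rightarrow> ('a \<times> 'a) set" where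
  "cr E S = {(u,v). u \<in> S \<and> v \<in> S \<and> {u,v} \<in> E}"
definition conn :: "'a set set \<Rightarrow> 'a set \<Rightarrow> bool" where
  "conn E S \<longleftrightarrow> S \<noteq> {} \<and> (\<forall>x\<in>S. \<forall>y\<in>S. (x,y) \<in> (cr E S)\<^sup>*)"
definition cmp :: "'a set set \<Rightarrow> 'a set \<Rightarrow> 'a \<Rightarrow> 'a set" where
  "cmp E S a = {b\<in>S. (a,b) \<in> (cr E S)\<^sup>*}"

lemma cr_sym: "(u,v) \<in> cr E S \<Longrightarrow> (v,u) \<in> cr E S"
  by (auto simp: cr_def insert_commute)

lemma rt_sym: "(x,y) \<in> (cr E S)\<^sup>* \<Longrightarrow> (y,x) \<in> (cr E S)\<^sup>*"
proof (induction rule: rtrancl_induct)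
  case base then show ?case by simp
next
  case (step y z)
  then show ?case using cr_sym converse_rtrancl_into_rtrancl by metis
qed

lemma cr_mono: "S \<subseteq> S' \<Longrightarrow> cr E S \<subseteq> cr E S'"
  by (auto simp: cr_def)

lemma rt_mono: "S \<subseteq> S' \<Longrightarrow> (x,y) \<in> (cr E S)\<^sup>* \<Longrightarrow> (x,y) \<in> (cr E S')\<^sup>*"
  using rtrancl_mono[OF cr_mono] by blast

lemma rt_in: "(x,y) \<in> (cr E S)\<^sup>* \<Longrightarrow> x = y \<or> y \<in> S"
  by (induction rule: rtrancl_induct) (auto simp: cr_def)

lemma edge_rt: "u \<in> S \<Longrightarrow> v \<in> S \<Longrightarrow> {u,v} \<in> E \<Longrightarrow> (u,v) \<in> (cr E S)\<^sup>*"
  by (auto simp: cr_def)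

lemma conn_intro:
  assumes "a \<in> S" "\<And>y. y \<in> S \<Longrightarrow> (y,a) \<in> (cr E S)\<^sup>*"
  shows "conn E S"
  unfolding conn_def using assms(1) apply auto
  by (meson assms(2) rt_sym rtrancl_trans)

lemma connD: "conn E S \<Longrightarrow> x \<in> S \<Longrightarrow> y \<in> S \<Longrightarrow> (x,y) \<in> (cr E S)\<^sup>*"
  by (auto simp: conn_def)

lemma comp_stay:
  assumes "x \<in> S" "(x,y) \<in> (cr E S)\<^sup>*"
  shows "(x,y) \<in> (cr E (cmp E S x))\<^sup>*"
  using assms(2)
proof (induction rule: rtrancl_induct)
  case base then show ?case by simp
next
  case (step y z)
  have "y \<in> S" "z \<in> S" "{y,z} \<in> E" using step(2) by (auto simp: cr_def)
  moreover have "(x,z) \<in> (cr E S)\<^sup>*" using step(1,2) by simp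
  ultimately have "(y,z) \<in> cr E (cmp E S x)" using step(1) unfolding cr_def cmp_def by blast
  then show ?case using step(3) by simp
qed

lemma comp_eq: assumes "y \<in> cmp E S c" shows "cmp E S y = cmp E S c"
proof -
  have cy: "(c,y) \<in> (cr E S)\<^sup>*" using assms by (simp add: cmp_def)
  then have yc: "(y,c) \<in> (cr E S)\<^sup>*" by (rule rt_sym)
  show ?thesis
  proof (intro set_eqI iffI)
    fix z assume "z \<in> cmp E S y"
    then show "z \<in> cmp E S c" using cy unfolding cmp_def by (auto intro: rtrancl_trans)
  next
    fix z assume "z \<in> cmp E S c"
    then show "z \<in> cmp E S y" using yc unfolding cmp_def by (auto intro: rtrancl_trans)
  qed
qed

lemma comp_self: "y \<in> S \<Longrightarrow> y \<in> cmp E S y"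
  by (simp add: cmp_def)

lemma comp_sub: "cmp E S a \<subseteq> S"
  by (auto simp: cmp_def)

lemma comp_closed: "u \<in> cmp E S a \<Longrightarrow> v \<in> S \<Longrightarrow> {u,v} \<in> E \<Longrightarrow> v \<in> cmp E S a"
proof -
  assume a: "u \<in> cmp E S a" "v \<in> S" "{u,v} \<in> E"
  then have "(u,v) \<in> cr E S" by (auto simp: cr_def cmp_def)
  with a(1,2) show ?thesis by (auto simp: cmp_def intro: rtrancl_into_rtrancl)
qed

lemma comp_conn: assumes "x \<in> S" shows "conn E (cmp E S x)"
proof (rule conn_intro[of x])
  show "x \<in> cmp E S x" using assms by (rule comp_self)
  fix y assume "y \<in> cmp E S x"
  then have "(x,y) \<in> (cr E S)\<^sup>*" by (simp add: cmp_def)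
  then have "(x,y) \<in> (cr E (cmp E S x))\<^sup>*" by (rule comp_stay[OF assms])
  then show "(y,x) \<in> (cr E (cmp E S x))\<^sup>*" by (rule rt_sym)
qed

lemma first_hit:
  assumes "x \<in> S" "x \<noteq> w" "(x,w) \<in> (cr E S)\<^sup>*"
  shows "\<exists>w'. w' \<in> S - {w} \<and> {w',w} \<in> E \<and> (x,w') \<in> (cr E (S-{w}))\<^sup>*"
proof -
  have "(x,y) \<in> (cr E (S-{w}))\<^sup>* \<or> (\<exists>w'. w' \<in> S - {w} \<and> {w',w} \<in> E \<and> (x,w') \<in> (cr E (S-{w}))\<^sup>*)"
    if "(x,y) \<in> (cr E S)\<^sup>*" for y
    using that
  proof (induction rule: rtrancl_induct)
    case base then show ?case by simp
  next
    case (step y z)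
    show ?case
    proof (cases "(x,y) \<in> (cr E (S-{w}))\<^sup>*")
      case True
      note xy = True
      have yS: "y \<in> S - {w}" using rt_in[OF True] assms(1,2) by auto
      show ?thesis
      proof (cases "z = w")
        case True
        then show ?thesis using yS step(2) xy by (auto simp: cr_def)
      next
        case False
        then have "(y,z) \<in> cr E (S-{w})" using yS step(2) by (auto simp: cr_def)
        then show ?thesis using xy by (meson rtrancl.rtrancl_into_rtrancl)
      qed
    next
      case False
      with step(3) have "\<exists>w'. w' \<in> S - {w} \<and> {w',w} \<in> E \<and> (x,w') \<in> (cr E (S-{w}))\<^sup>*"
        by (simp only: simp_thms)
      then show ?thesis by (rule disjI2)
    qed
  qed
  from this[OF assms(3)] show ?thesis
  proof
    assume "(x, w) \<in> (cr E (S - {w}))\<^sup>*"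
    from rt_in[OF this] assms(2) show ?thesis by simp
  qed
qed

lemma attach:
  assumes "conn E T" "w \<in> T" "y \<in> T - {w}"
  shows "conn E (insert w (cmp E (T-{w}) y))"
proof (rule conn_intro[of w])
  define C where "C = cmp E (T-{w}) y"
  show "w \<in> insert w (cmp E (T - {w}) y)" by simp
  fix z assume z: "z \<in> insert w (cmp E (T - {w}) y)"
  show "(z, w) \<in> (cr E (insert w (cmp E (T - {w}) y)))\<^sup>*"
  proof (cases "z = w")
    case True then show ?thesis by simp
  next
    case False
    then have zc: "z \<in> C" using z C_def by simp
    then have zT: "z \<in> T - {w}" using comp_sub[of E "T-{w}" y] unfolding C_def by blast
    have "(z,w) \<in> (cr E T)\<^sup>*" using connD[OF assms(1)] zT assms(2) by blast
    then obtain w' where w': "w' \<in> T - {w}" "{w',w} \<in> E" "(z,w') \<in> (cr E (T-{w}))\<^sup>*"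
      using first_hit[of z T w E] zT by blast
    have ceq: "cmp E (T-{w}) z = C" unfolding C_def by (rule comp_eq[OF zc[unfolded C_def]])
    have p: "(z,w') \<in> (cr E C)\<^sup>*" using comp_stay[OF zT w'(3)] unfolding ceq .
    have w'C: "w' \<in> C" using w'(1,3) ceq unfolding cmp_def by blast
    have sub: "C \<subseteq> insert w C" by blast
    have "(w',w) \<in> (cr E (insert w C))\<^sup>*"
      by (rule edge_rt) (use w'C w'(2) in auto)
    moreover have "(z,w') \<in> (cr E (insert w C))\<^sup>*"
      by (rule rt_mono[OF sub p])
    ultimately show ?thesis unfolding C_def by (rule rtrancl_trans[rotated])
  qed
qed

lemma exit_edge:
  assumes "conn E U" "A \<subseteq> U" "a \<in> A" "b \<in> U" "b \<notin> A"
  shows "\<exists>u\<in>A. \<exists>v\<in>U. v \<notin> A \<and> {u,v} \<in> E"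
proof -
  have "y \<in> A \<or> (\<exists>u\<in>A. \<exists>v\<in>U. v \<notin> A \<and> {u,v} \<in> E)" if "(a,y) \<in> (cr E U)\<^sup>*" for y
    using that
  proof (induction rule: rtrancl_induct)
    case base then show ?case using assms(3) by simp
  next
    case (step y z)
    then have yz: "y \<in> U" "z \<in> U" "{y,z} \<in> E" by (auto simp: cr_def)
    show ?case
    proof (cases "y \<in> A \<and> z \<notin> A")
      case True then show ?thesis using yz by blast
    next
      case False then show ?thesis using step(3) by blast
    qed
  qed
  then show ?thesis using connD[OF assms(1) _ assms(4)] assms by blast
qed

lemma not_conn: assumes "a \<in> S" "\<not> conn E S" shows "\<exists>c\<in>S. c \<notin> cmp E S a"
proof (rule ccontr)
  assume "\<not> ?thesis"
  then have "\<And>y. y \<in> S \<Longrightarrow> (y,a) \<in> (cr E S)\<^sup>*" by (auto simp: cmp_def intro: rt_sym)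
  then have "conn E S" using conn_intro[of a S E] assms(1) by blast
  then show False using assms(2) by blast
qed


lemma NC:
  assumes "finite T" "conn E T" "v \<in> T" "card T \<ge> 2"
  shows "\<exists>u\<in>T. u \<noteq> v \<and> conn E (T - {u})"
  using assms
proof (induction "card T" arbitrary: T v rule: less_induct)
  case less
  have "T - {v} \<noteq> {}"
  proof
    assume "T - {v} = {}"
    then have "T \<subseteq> {v}" by auto
    then have "card T \<le> 1" using card_mono[of "{v}" T] by simp
    then show False using less.prems(4) by simp
  qed
  then obtain w where w: "w \<in> T" "w \<noteq> v" by blast
  show ?case
  proof (cases "conn E (T - {w})")
    case True then show ?thesis using w by blast
  next
    case False
    have vTw: "v \<in> T - {w}" using w less.prems(3) by simp
    obtain c where c: "c \<in> T - {w}" "c \<notin> cmp E (T-{w}) v"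
      using not_conn[OF vTw False] by blast
    define C where "C = cmp E (T-{w}) c"
    have vC: "v \<notin> C"
    proof
      assume "v \<in> C"
      then have "cmp E (T-{w}) v = cmp E (T-{w}) c" unfolding C_def by (rule comp_eq)
      then show False using c comp_self[OF c(1), of E] by simp
    qed
    define D where "D = insert w C"
    have Dconn: "conn E D" unfolding D_def C_def by (rule attach[OF less.prems(2) w(1) c(1)])
    have CT: "C \<subseteq> T - {w}" unfolding C_def by (rule comp_sub)
    have DT: "D \<subseteq> T" unfolding D_def using CT w(1) by blast
    have "v \<notin> D" unfolding D_def using vC w(2) by simp
    then have "D \<subset> T" using DT less.prems(3) by blast
    then have cardD: "card D < card T" using less.prems(1) psubset_card_mono by blast
    have cD: "c \<in> C" unfolding C_def by (rule comp_self[OF c(1)])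
    have finD: "finite D" using DT less.prems(1) finite_subset by blast
    have card2: "card D \<ge> 2"
    proof -
      have "{w,c} \<subseteq> D" using cD unfolding D_def by blast
      then have "card {w,c} \<le> card D" by (rule card_mono[OF finD])
      moreover have "card {w,c} = 2" using c(1) by auto
      ultimately show ?thesis by simp
    qed
    have wD: "w \<in> D" unfolding D_def by simp
    obtain u where u: "u \<in> D" "u \<noteq> w" "conn E (D - {u})"
      using less.hyps[OF cardD finD Dconn wD card2] by blast
    have uC: "u \<in> C" using u(1,2) unfolding D_def by simp
    have "conn E (T - {u})"
    proof (rule conn_intro[of w])
      show "w \<in> T - {u}" using w u by auto
      fix y assume y: "y \<in> T - {u}"
      show "(y, w) \<in> (cr E (T - {u}))\<^sup>*"
      proof (cases "y \<in> D")
        case True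
        have y1: "y \<in> D - {u}" using True y by simp
        have w1: "w \<in> D - {u}" using wD u(2) by simp
        have pth: "(y,w) \<in> (cr E (D - {u}))\<^sup>*" by (rule connD[OF u(3) y1 w1])
        have sb: "D - {u} \<subseteq> T - {u}" using DT by blast
        show ?thesis by (rule rt_mono[OF sb pth])
      next
        case False
        then have yT: "y \<in> T - {w}" "y \<notin> C" using y unfolding D_def by auto
        have "(y,w) \<in> (cr E T)\<^sup>*" using connD[OF less.prems(2)] yT w(1) by blast
        then obtain w' where w': "w' \<in> T - {w}" "{w',w} \<in> E" "(y,w') \<in> (cr E (T-{w}))\<^sup>*"
          using first_hit[of y T w E] yT by blast
        define Cy where "Cy = cmp E (T-{w}) y"
        have uCy: "u \<notin> Cy"
        proof
          assume "u \<in> Cy"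
          then have e1: "cmp E (T-{w}) u = cmp E (T-{w}) y" unfolding Cy_def by (rule comp_eq)
          have e2: "cmp E (T-{w}) u = cmp E (T-{w}) c" using uC unfolding C_def by (rule comp_eq)
          have "y \<in> cmp E (T-{w}) y" by (rule comp_self[OF yT(1)])
          then have "y \<in> C" unfolding C_def using e1 e2 by simp
          then show False using yT(2) by simp
        qed
        have p: "(y,w') \<in> (cr E Cy)\<^sup>*" unfolding Cy_def by (rule comp_stay[OF yT(1) w'(3)])
        have w'Cy: "w' \<in> Cy" using w'(1,3) unfolding Cy_def cmp_def by blast
        have CyT: "Cy \<subseteq> T - {u}" using uCy comp_sub[of E "T-{w}" y] unfolding Cy_def by blast
        have "(y,w') \<in> (cr E (T - {u}))\<^sup>*" using rt_mono[OF CyT p] .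
        moreover have "(w',w) \<in> (cr E (T - {u}))\<^sup>*"
          by (rule edge_rt) (use w'Cy CyT w'(2) w(1) u(2) in auto)
        ultimately show ?thesis by (rule rtrancl_trans)
      qed
    qed
    moreover have "u \<in> T" "u \<noteq> v" using uC CT vC by auto
    ultimately show ?thesis by blast
  qed
qed

lemma shrink:
  assumes "finite U" "conn E U" "1 \<le> k" "k \<le> card U"
  shows "\<exists>S\<subseteq>U. conn E S \<and> card S = k"
  using assms
proof (induction "card U" arbitrary: U rule: less_induct)
  case less
  show ?case
  proof (cases "card U = k")
    case True then show ?thesis using less.prems(2) by blast
  next
    case False
    then have c2: "card U \<ge> 2" using less.prems(3,4) by linarith
    obtain v where v: "v \<in> U" using less.prems(2) unfolding conn_def by blast
    obtain u where u: "u \<in> U" "conn E (U - {u})"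
      using NC[OF less.prems(1,2) v c2] by blast
    have cu: "card (U - {u}) = card U - 1" using u(1) less.prems(1) by simp
    have lt: "card (U - {u}) < card U" using cu c2 by simp
    have fu: "finite (U - {u})" using less.prems(1) by simp
    have ku: "k \<le> card (U - {u})" using cu False less.prems(4) by simp
    obtain S where "S \<subseteq> U - {u}" "conn E S" "card S = k"
      using less.hyps[OF lt fu u(2) less.prems(3) ku] by blast
    then show ?thesis by blast
  qed
qed

definition cisrel :: "'a set \<Rightarrow> 'a set set \<Rightarrow> nat \<Rightarrow> ('a set \<times> 'a set) set" where
  "cisrel V E k = {(S1,S2). S1 \<in> CIS_set V E k \<and> S2 \<in> CIS_set V E k \<and> CIS_adj k S1 S2}"

lemma gc_conn: "graph_connected S (induced_edges E S) \<longleftrightarrow> conn E S"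
proof -
  have "{(u, v). u \<in> S \<and> v \<in> S \<and> {u, v} \<in> induced_edges E S} = cr E S"
    by (auto simp: induced_edges_def cr_def)
  then show ?thesis unfolding graph_connected_def connected_rel_def conn_def by simp
qed

lemma gc_conn2: "graph_connected V E \<longleftrightarrow> conn E V"
proof -
  have "{(u, v). u \<in> V \<and> v \<in> V \<and> {u, v} \<in> E} = cr E V"
    by (auto simp: cr_def)
  then show ?thesis unfolding graph_connected_def connected_rel_def conn_def by simp
qed

lemma CIS_mem: "S \<in> CIS_set V E k \<longleftrightarrow> S \<subseteq> V \<and> conn E S \<and> card S = k"
  unfolding CIS_set_def is_CIS_def gc_conn by blast

lemma cis_sym: "(A,B) \<in> (cisrel V E k)\<^sup>* \<Longrightarrow> (B,A) \<in> (cisrel V E k)\<^sup>*"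
proof (induction rule: rtrancl_induct)
  case base then show ?case by simp
next
  case (step y z)
  have "(z,y) \<in> cisrel V E k" using step(2) unfolding cisrel_def CIS_adj_def
    by (auto simp: Int_commute)
  then show ?case using step(3) by (rule converse_rtrancl_into_rtrancl)
qed

lemma cis_step:
  assumes "A \<subseteq> V" "conn E A" "card A = k" "B \<subseteq> V" "conn E B" "card B = k"
    "A \<noteq> B" "card (A \<inter> B) = k - 1"
  shows "(A,B) \<in> (cisrel V E k)\<^sup>*"
proof -
  have "(A,B) \<in> cisrel V E k" unfolding cisrel_def CIS_adj_def CIS_mem using assms by simp
  then show ?thesis by simp
qed

lemma move:
  assumes finU: "finite U" and UV: "U \<subseteq> V" and cw: "conn E (U - {w})"
    and k2: "2 \<le> k" and kU: "k < card U" and wU: "w \<in> U"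
    and AU: "A \<subseteq> U" and cA: "conn E A" and kA: "card A = k" and wA: "w \<in> A"
    and aA: "a \<in> A - {w}"
  shows "\<exists>A'. A' \<subseteq> U - {w} \<and> conn E A' \<and> card A' = k \<and> (A,A') \<in> (cisrel V E k)\<^sup>*"
  using AU cA kA wA aA
proof (induction "k - card (cmp E (A-{w}) a)" arbitrary: A a rule: less_induct)
  case less
  have finA: "finite A" using less.prems(1) finU finite_subset by blast
  have cAw: "card (A - {w}) = k - 1" using less.prems(3,4) finA by simp
  have cUw: "card (U - {w}) = card U - 1" using wU finU by simp
  have AwUw: "A - {w} \<subseteq> U - {w}" using less.prems(1) by blast
  have ltAU: "card (A - {w}) < card (U - {w})" using cAw cUw kU k2 by simp
  have AinC: "A \<in> CIS_set V E k" unfolding CIS_mem using less.prems(1-3) UV by blast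
  show ?case
  proof (cases "conn E (A - {w})")
    case True
    have "\<not> U - {w} \<subseteq> A - {w}"
    proof
      assume "U - {w} \<subseteq> A - {w}"
      then have "card (U - {w}) \<le> card (A - {w})" using card_mono finA by blast
      then show False using ltAU by simp
    qed
    then obtain b where b: "b \<in> U - {w}" "b \<notin> A - {w}" by blast
    obtain u v where uv: "u \<in> A - {w}" "v \<in> U - {w}" "v \<notin> A - {w}" "{u,v} \<in> E"
      using exit_edge[OF cw AwUw less.prems(5) b] by blast
    have vA: "v \<notin> A" using uv(2,3) by blast
    define A' where "A' = insert v (A - {w})"
    have A'U: "A' \<subseteq> U - {w}" unfolding A'_def using uv(2) AwUw by blast
    have cA': "conn E A'"
    proof (rule conn_intro[of u])
      show "u \<in> A'" unfolding A'_def using uv(1) by blast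
      fix y assume y: "y \<in> A'"
      show "(y,u) \<in> (cr E A')\<^sup>*"
      proof (cases "y = v")
        case True
        have e: "{v,u} \<in> E" using uv(4) by (simp add: insert_commute)
        show ?thesis unfolding True by (rule edge_rt) (use e uv(1) in \<open>auto simp: A'_def\<close>)
      next
        case False
        then have y1: "y \<in> A - {w}" using y unfolding A'_def by blast
        have p: "(y,u) \<in> (cr E (A - {w}))\<^sup>*" by (rule connD[OF True y1 uv(1)])
        have sb: "A - {w} \<subseteq> A'" unfolding A'_def by blast
        show ?thesis by (rule rt_mono[OF sb p])
      qed
    qed
    have kA': "card A' = k"
    proof -
      have "v \<notin> A - {w}" using vA by blast
      then have "card A' = card (A - {w}) + 1" unfolding A'_def using finA by simp
      then show ?thesis using cAw k2 by simp
    qed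
    have ne: "A \<noteq> A'" using vA unfolding A'_def by blast
    have int: "A \<inter> A' = A - {w}" using vA unfolding A'_def by blast
    have "(A,A') \<in> (cisrel V E k)\<^sup>*"
      by (rule cis_step) (use less.prems(1-3) UV A'U cA' kA' ne int cAw in auto)
    then show ?thesis using A'U cA' kA' by blast
  next
    case False
    define Q where "Q = cmp E (A-{w}) a"
    obtain b where b: "b \<in> A - {w}" "b \<notin> Q"
      using not_conn[OF less.prems(5) False] unfolding Q_def by blast
    define R where "R = cmp E (A-{w}) b"
    have QR: "Q \<inter> R = {}"
    proof (rule ccontr)
      assume "Q \<inter> R \<noteq> {}"
      then obtain x where x: "x \<in> Q" "x \<in> R" by blast
      have e1: "cmp E (A-{w}) x = Q" using x(1) unfolding Q_def by (rule comp_eq)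
      have e2: "cmp E (A-{w}) x = R" using x(2) unfolding R_def by (rule comp_eq)
      have "b \<in> R" unfolding R_def by (rule comp_self[OF b(1)])
      then show False using e1 e2 b(2) by simp
    qed
    have QA: "Q \<subseteq> A - {w}" unfolding Q_def by (rule comp_sub)
    have RA: "R \<subseteq> A - {w}" unfolding R_def by (rule comp_sub)
    have aQ: "a \<in> Q" unfolding Q_def by (rule comp_self[OF less.prems(5)])
    have bR: "b \<in> R" unfolding R_def by (rule comp_self[OF b(1)])
    have QU: "Q \<subseteq> U - {w}" using QA AwUw by blast
    have "\<not> U - {w} \<subseteq> Q"
    proof
      assume "U - {w} \<subseteq> Q"
      then have "U - {w} \<subseteq> A - {w}" using QA by blast
      then have "card (U - {w}) \<le> card (A - {w})" using card_mono finA by blast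
      then show False using ltAU by simp
    qed
    then obtain b2 where b2: "b2 \<in> U - {w}" "b2 \<notin> Q" by blast
    obtain q v where qv: "q \<in> Q" "v \<in> U - {w}" "v \<notin> Q" "{q,v} \<in> E"
      using exit_edge[OF cw QU aQ b2] by blast
    have vA: "v \<notin> A"
    proof
      assume "v \<in> A"
      then have "v \<in> A - {w}" using qv(2) by blast
      then have "v \<in> Q" using comp_closed[of q E "A-{w}" a v] qv(1,4) unfolding Q_def by blast
      then show False using qv(3) by blast
    qed
    have bAw: "b \<in> A - {w}" by (rule b(1))
    have cWR: "conn E (insert w R)" unfolding R_def
      by (rule attach[OF less.prems(2) less.prems(4) bAw])
    have finWR: "finite (insert w R)" using RA finA finite_subset by blast
    have c2: "card (insert w R) \<ge> 2"
    proof -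
      have "{w,b} \<subseteq> insert w R" using bR by blast
      then have "card {w,b} \<le> card (insert w R)" by (rule card_mono[OF finWR])
      moreover have "card {w,b} = 2" using b(1) by auto
      ultimately show ?thesis by simp
    qed
    obtain p where p: "p \<in> insert w R" "p \<noteq> w" "conn E (insert w R - {p})"
      using NC[OF finWR cWR _ c2, of w] by blast
    have pR: "p \<in> R" using p(1,2) by blast
    have pA: "p \<in> A - {w}" using pR RA by blast
    have pQ: "p \<notin> Q" using pR QR by blast
    have pv: "p \<noteq> v" using pA vA by blast
    define A1 where "A1 = insert v A - {p}"
    have wA1: "w \<in> A1" unfolding A1_def using less.prems(4) pA by blast
    have key: "(y,w) \<in> (cr E A1)\<^sup>*" if y: "y \<in> A - {w}" "y \<notin> R" for y
    proof -
      have yA: "y \<in> A" "y \<noteq> w" using y(1) by auto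
      have "(y,w) \<in> (cr E A)\<^sup>*" by (rule connD[OF less.prems(2) yA(1) less.prems(4)])
      then obtain w' where w': "w' \<in> A - {w}" "{w',w} \<in> E" "(y,w') \<in> (cr E (A-{w}))\<^sup>*"
        using first_hit[of y A w E] yA by blast
      define Cy where "Cy = cmp E (A-{w}) y"
      have pCy: "p \<notin> Cy"
      proof
        assume "p \<in> Cy"
        then have e1: "cmp E (A-{w}) p = cmp E (A-{w}) y" unfolding Cy_def by (rule comp_eq)
        have e2: "cmp E (A-{w}) p = cmp E (A-{w}) b" using pR unfolding R_def by (rule comp_eq)
        have "y \<in> cmp E (A-{w}) y" by (rule comp_self[OF y(1)])
        then have "y \<in> R" unfolding R_def using e1 e2 by simp
        then show False using y(2) by simp
      qed
      have pth: "(y,w') \<in> (cr E Cy)\<^sup>*" unfolding Cy_def by (rule comp_stay[OF y(1) w'(3)])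
      have w'Cy: "w' \<in> Cy" using w'(1,3) unfolding Cy_def cmp_def by blast
      have CyA: "Cy \<subseteq> A1" using pCy comp_sub[of E "A-{w}" y] unfolding Cy_def A1_def by blast
      have "(y,w') \<in> (cr E A1)\<^sup>*" by (rule rt_mono[OF CyA pth])
      moreover have "(w',w) \<in> (cr E A1)\<^sup>*"
        by (rule edge_rt) (use w'Cy CyA w'(2) wA1 in auto)
      ultimately show ?thesis by (rule rtrancl_trans)
    qed
    have qA1: "q \<in> A1" unfolding A1_def using qv(1) QA pQ by blast
    have qR: "q \<notin> R" using qv(1) QR by blast
    have vA1: "v \<in> A1" unfolding A1_def using pv by blast
    have cA1: "conn E A1"
    proof (rule conn_intro[OF wA1])
      fix y assume y: "y \<in> A1"
      show "(y,w) \<in> (cr E A1)\<^sup>*"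
      proof (cases "y = w")
        case True then show ?thesis by simp
      next
        case yw: False
        show ?thesis
        proof (cases "y = v")
          case True
          have e: "{v,q} \<in> E" using qv(4) by (simp add: insert_commute)
          have "(v,q) \<in> (cr E A1)\<^sup>*" by (rule edge_rt[OF vA1 qA1 e])
          moreover have "(q,w) \<in> (cr E A1)\<^sup>*" using key qv(1) QA qR by blast
          ultimately show ?thesis unfolding True by (rule rtrancl_trans)
        next
          case yv: False
          then have yA: "y \<in> A - {w}" using y yw unfolding A1_def by blast
          show ?thesis
          proof (cases "y \<in> R")
            case True
            have y1: "y \<in> insert w R - {p}" using True y unfolding A1_def by blast
            have w1: "w \<in> insert w R - {p}" using p(2) by blast
            have pth: "(y,w) \<in> (cr E (insert w R - {p}))\<^sup>*" by (rule connD[OF p(3) y1 w1])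
            have sb: "insert w R - {p} \<subseteq> A1" unfolding A1_def using RA less.prems(4) by blast
            show ?thesis by (rule rt_mono[OF sb pth])
          next
            case False
            then show ?thesis using key yA by blast
          qed
        qed
      qed
    qed
    have kA1: "card A1 = k"
    proof -
      have "card (insert v A) = k + 1" using vA finA less.prems(3) by simp
      moreover have "p \<in> insert v A" using pA by blast
      ultimately show ?thesis unfolding A1_def using finA by simp
    qed
    have A1U: "A1 \<subseteq> U" unfolding A1_def using qv(2) less.prems(1) by blast
    have ne: "A \<noteq> A1" using vA vA1 by blast
    have int: "A \<inter> A1 = A - {p}" unfolding A1_def using vA by blast
    have cint: "card (A \<inter> A1) = k - 1" unfolding int using pA finA less.prems(3) by simp
    have step1: "(A,A1) \<in> (cisrel V E k)\<^sup>*"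
      by (rule cis_step) (use less.prems(1-3) UV A1U cA1 kA1 ne cint in auto)
    have aA1: "a \<in> A1 - {w}" unfolding A1_def using aQ QA pQ by blast
    define Q' where "Q' = cmp E (A1-{w}) a"
    have QQ': "insert v Q \<subseteq> Q'"
    proof
      fix y assume y: "y \<in> insert v Q"
      have QA1: "Q \<subseteq> A1 - {w}" unfolding A1_def using QA pQ by blast
      have aq: "(a,q) \<in> (cr E (A1-{w}))\<^sup>*" if "q \<in> Q" for q
      proof -
        have "(a,q) \<in> (cr E (A-{w}))\<^sup>*" using that unfolding Q_def cmp_def by blast
        then have "(a,q) \<in> (cr E Q)\<^sup>*" unfolding Q_def by (rule comp_stay[OF less.prems(5)])
        then show ?thesis by (rule rt_mono[OF QA1])
      qed
      show "y \<in> Q'"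
      proof (cases "y = v")
        case True
        have vw: "v \<in> A1 - {w}" using vA1 qv(2) by blast
        have "(q,v) \<in> (cr E (A1-{w}))\<^sup>*" by (rule edge_rt) (use QA1 qv(1,4) vw in auto)
        then have "(a,v) \<in> (cr E (A1-{w}))\<^sup>*" using aq[OF qv(1)] by (meson rtrancl_trans)
        then show ?thesis unfolding True Q'_def cmp_def using vw by blast
      next
        case False
        then have yQ: "y \<in> Q" using y by blast
        then show ?thesis unfolding Q'_def cmp_def using aq[OF yQ] QA1 by blast
      qed
    qed
    have finA1: "finite (A1 - {w})" using A1U finU finite_subset by blast
    have Q'sub: "Q' \<subseteq> A1 - {w}" unfolding Q'_def by (rule comp_sub)
    have finQ': "finite Q'" using Q'sub finA1 finite_subset by blast
    have "card (insert v Q) \<le> card Q'" by (rule card_mono[OF finQ' QQ'])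
    moreover have "card (insert v Q) = card Q + 1"
      using qv(3) QA finA finite_subset by fastforce
    moreover have "card Q' \<le> k"
    proof -
      have "card Q' \<le> card (A1 - {w})" by (rule card_mono[OF finA1 Q'sub])
      also have "\<dots> \<le> card A1" using finA1 by (simp add: card_Diff1_le)
      finally show ?thesis using kA1 by simp
    qed
    ultimately have meas: "k - card (cmp E (A1-{w}) a) < k - card (cmp E (A-{w}) a)"
      unfolding Q_def[symmetric] Q'_def[symmetric] by linarith
    obtain A' where A': "A' \<subseteq> U - {w}" "conn E A'" "card A' = k" "(A1,A') \<in> (cisrel V E k)\<^sup>*"
      using less.hyps[OF meas A1U cA1 kA1 wA1 aA1] by blast
    have "(A,A') \<in> (cisrel V E k)\<^sup>*" using step1 A'(4) by (rule rtrancl_trans)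
    then show ?thesis using A' by blast
  qed
qed

lemma to_sub:
  assumes finU: "finite U" and UV: "U \<subseteq> V" and cw: "conn E (U - {w})"
    and k2: "2 \<le> k" and kU: "k < card U" and wU: "w \<in> U"
    and AU: "A \<subseteq> U" and cA: "conn E A" and kA: "card A = k"
  shows "\<exists>A'. A' \<subseteq> U - {w} \<and> conn E A' \<and> card A' = k \<and> (A,A') \<in> (cisrel V E k)\<^sup>*"
proof (cases "w \<in> A")
  case True
  have finA: "finite A" using AU finU finite_subset by blast
  have "card (A - {w}) = k - 1" using True finA kA by simp
  then have "card (A - {w}) \<noteq> 0" using k2 by simp
  then have "A - {w} \<noteq> {}" by (metis card.empty)
  then obtain a where aA: "a \<in> A - {w}" by blast
  show ?thesis by (rule move[OF finU UV cw k2 kU wU AU cA kA True aA])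
next
  case False
  then have "A \<subseteq> U - {w}" using AU by blast
  then show ?thesis using cA kA by blast
qed

lemma mainP:
  assumes "finite U" "U \<subseteq> V" "conn E U" "2 \<le> k" "k \<le> card U"
    "A \<subseteq> U" "conn E A" "card A = k" "B \<subseteq> U" "conn E B" "card B = k"
  shows "(A,B) \<in> (cisrel V E k)\<^sup>*"
  using assms
proof (induction "card U" arbitrary: U A B rule: less_induct)
  case less
  show ?case
  proof (cases "card U = k")
    case True
    have "A = U" using card_subset_eq[OF less.prems(1) less.prems(6)] less.prems(8) True by simp
    moreover have "B = U" using card_subset_eq[OF less.prems(1) less.prems(9)] less.prems(11) True by simp
    ultimately show ?thesis by simp
  next
    case False
    then have kU: "k < card U" using less.prems(5) by simp
    have c2: "card U \<ge> 2" using kU less.prems(4) by simp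
    obtain v where v: "v \<in> U" using less.prems(3) unfolding conn_def by blast
    obtain u where u: "u \<in> U" "conn E (U - {u})"
      using NC[OF less.prems(1,3) v c2] by blast
    obtain A' where A': "A' \<subseteq> U - {u}" "conn E A'" "card A' = k" "(A,A') \<in> (cisrel V E k)\<^sup>*"
      using to_sub[OF less.prems(1,2) u(2) less.prems(4) kU u(1) less.prems(6-8)] by blast
    obtain B' where B': "B' \<subseteq> U - {u}" "conn E B'" "card B' = k" "(B,B') \<in> (cisrel V E k)\<^sup>*"
      using to_sub[OF less.prems(1,2) u(2) less.prems(4) kU u(1) less.prems(9-11)] by blast
    have cu: "card (U - {u}) = card U - 1" using u(1) less.prems(1) by simp
    have lt: "card (U - {u}) < card U" using cu c2 by simp
    have fu: "finite (U - {u})" using less.prems(1) by simp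
    have ku: "k \<le> card (U - {u})" using cu kU by simp
    have uV: "U - {u} \<subseteq> V" using less.prems(2) by blast
    have "(A',B') \<in> (cisrel V E k)\<^sup>*"
      by (rule less.hyps[OF lt fu uV u(2) less.prems(4) ku A'(1-3) B'(1-3)])
    moreover have "(B',B) \<in> (cisrel V E k)\<^sup>*" using B'(4) by (rule cis_sym)
    ultimately show ?thesis using A'(4) by (meson rtrancl_trans)
  qed
qed

theorem theorem1:
  fixes V :: "'a set" and E :: "'a set set" and k :: nat
  assumes "finite V"
    and "simple_graph V E"
    and "graph_connected V E"
    and "2 \<le> k" and "k < card V"
  shows "connected_rel (CIS_set V E k) (CIS_adj k)"
proof -
  have cV: "conn E V" using assms(3) unfolding gc_conn2 .
  have k1: "1 \<le> k" using assms(4) by simp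
  have kV: "k \<le> card V" using assms(5) by simp
  obtain S where S: "S \<subseteq> V" "conn E S" "card S = k"
    using shrink[OF assms(1) cV k1 kV] by blast
  have "S \<in> CIS_set V E k" unfolding CIS_mem using S by blast
  then have ne: "CIS_set V E k \<noteq> {}" by blast
  have all: "(x,y) \<in> (cisrel V E k)\<^sup>*" if x: "x \<in> CIS_set V E k" and y: "y \<in> CIS_set V E k" for x y
  proof -
    have x': "x \<subseteq> V" "conn E x" "card x = k" using x unfolding CIS_mem by auto
    have y': "y \<subseteq> V" "conn E y" "card y = k" using y unfolding CIS_mem by auto
    show ?thesis by (rule mainP[OF assms(1) subset_refl cV assms(4) kV x' y'])
  qed
  have eq: "{(u, v). u \<in> CIS_set V E k \<and> v \<in> CIS_set V E k \<and> CIS_adj k u v} = cisrel V E k"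
    by (simp add: cisrel_def)
  show ?thesis unfolding connected_rel_def eq using ne all by blast
qed

end
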